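(* There exists $n_0$ such that for all $n\ge n_0$ the following holds. Let $\mathcal{H} = (X,\mathcal{F})$ be a hypergraph with $|X|=n$ and $|\mathcal{F}|\leq n^{\log(n)}$ such that every hyperedge contains at least $\log^3(n)$ vertices. Then in the Waiter-Client game on $\mathcal{H}$, Waiter has a strategy such that at the end of the game the set $C$ of Client's elements satisfies $|C\cap f| \geq \frac{|f|}{100}$ for every $f\in \mathcal{F}$.
   Context: Waiter-Client game on a hypergraph $(X,\mathcal{F})$: in each round Waiter offers Client two previously unclaimed elements of $X$; Client keeps one and the other goes to Waiter; if in the final round only one unclaimed element remains, it goes to Waiter. The game ends when all elements are claimed. *)

theory Defs
  imports Complex_Main
begin

text \<open>A position is given by the set U of unclaimed elements
and the set C of elements claimed so far by Client (Waiter's elements are irrelevant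
for the goal). waiter_wins P U C holds iff Waiter has a strategy guaranteeing that
Client's final set satisfies P. While at least two elements are unclaimed, Waiter
must offer two distinct unclaimed elements a, b; Client keeps either one, the other
goes to Waiter. When at most one element remains, it goes to Waiter and the game ends.\<close>

inductive waiter_wins :: "('a set \<Rightarrow> bool) \<Rightarrow> 'a set \<Rightarrow> 'a set \<Rightarrow> bool"
  for P :: "'a set \<Rightarrow> bool" where
  game_end: "finite U \<Longrightarrow> card U \<le> 1 \<Longrightarrow> P C \<Longrightarrow> waiter_wins P U C"
| offer: "a \<in> U \<Longrightarrow> b \<in> U \<Longrightarrow> a \<noteq> b
          \<Longrightarrow> waiter_wins P (U - {a, b}) (insert a C)
          \<Longrightarrow> waiter_wins P (U - {a, b}) (insert b C)
          \<Longrightarrow> waiter_wins P U C"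

end

theory Submission
  imports Defs
begin

definition phi :: "nat set \<Rightarrow> nat set \<Rightarrow> nat set \<Rightarrow> real" where
  "phi U C f = (3/2) ^ card (f - U - C) * (1/2) ^ card (f \<inter> C)"

definition Phi :: "nat set set \<Rightarrow> nat set \<Rightarrow> nat set \<Rightarrow> real" where
  "Phi F U C = (\<Sum>f\<in>F. phi U C f)"

definition Dv :: "nat set set \<Rightarrow> nat set \<Rightarrow> nat set \<Rightarrow> nat \<Rightarrow> real" where
  "Dv F U C x = (\<Sum>f\<in>{f\<in>F. x \<in> f}. phi U C f)"

lemma phi_pos: "phi U C f > 0"
  by (simp add: phi_def)

lemma phi_step:
  assumes "a \<in> U" "b \<in> U" "a \<noteq> b" "C \<inter> U = {}" "finite f"
  shows "phi (U - {a, b}) (insert a C) f \<le>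
         phi U C f - (if a \<in> f then phi U C f / 2 else 0) + (if b \<in> f then phi U C f / 2 else 0)"
proof -
  have aC: "a \<notin> C" "b \<notin> C" using assms by auto
  have e1: "f - (U - {a, b}) - insert a C = (f - U - C) \<union> ({b} \<inter> f)"
    using assms aC by auto
  have e2: "f \<inter> insert a C = (f \<inter> C) \<union> ({a} \<inter> f)"
    by auto
  have bn: "b \<notin> f - U - C" using assms by auto
  have an: "a \<notin> f \<inter> C" using aC by auto
  define w where "w = card (f - U - C)"
  define c where "c = card (f \<inter> C)"
  have cw: "card (f - (U - {a, b}) - insert a C) = w + (if b \<in> f then 1 else 0)"
    unfolding e1 w_def using bn assms(5) by (auto simp: insert_absorb)
  have cc: "card (f \<inter> insert a C) = c + (if a \<in> f then 1 else 0)"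
    unfolding e2 c_def using an assms(5) by auto
  have p: "phi U C f = (3/2)^w * (1/2)^c" by (simp add: phi_def w_def c_def)
  have p': "phi (U - {a, b}) (insert a C) f = (3/2)^(w + (if b \<in> f then 1 else 0)) * (1/2)^(c + (if a \<in> f then 1 else 0))"
    unfolding phi_def cw cc ..
  have pos: "(3/2::real)^w * (1/2)^c > 0" by simp
  show ?thesis unfolding p p' using pos
    by (cases "a \<in> f"; cases "b \<in> f"; simp add: power_add field_simps)
qed

lemma Phi_step:
  assumes "a \<in> U" "b \<in> U" "a \<noteq> b" "C \<inter> U = {}" "finite F" "\<forall>f\<in>F. finite f"
  shows "Phi F (U - {a, b}) (insert a C) \<le> Phi F U C - Dv F U C a / 2 + Dv F U C b / 2"
proof -
  have "Phi F (U - {a, b}) (insert a C) \<le>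
     (\<Sum>f\<in>F. phi U C f - (if a \<in> f then phi U C f / 2 else 0) + (if b \<in> f then phi U C f / 2 else 0))"
    unfolding Phi_def using assms by (intro sum_mono phi_step) auto
  also have "\<dots> = Phi F U C - (\<Sum>f\<in>F. (if a \<in> f then phi U C f / 2 else 0)) + (\<Sum>f\<in>F. (if b \<in> f then phi U C f / 2 else 0))"
    unfolding Phi_def by (simp add: sum.distrib sum_subtractf)
  also have "\<dots> = Phi F U C - Dv F U C a / 2 + Dv F U C b / 2"
  proof -
    have h: "\<And>P x. (if P then x/2 else 0) = (if P then x else (0::real))/2" by simp
    show ?thesis unfolding Dv_def using assms(5) by (simp only: h sum.inter_filter sum_divide_distrib)
  qed
  finally show ?thesis .
qed

lemma Dv_bounds:
  assumes "finite F"
  shows "0 \<le> Dv F U C x \<and> Dv F U C x \<le> Phi F U C"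
proof
  show "0 \<le> Dv F U C x" unfolding Dv_def by (intro sum_nonneg) (simp add: less_imp_le phi_pos)
  show "Dv F U C x \<le> Phi F U C" unfolding Dv_def Phi_def
    using assms by (intro sum_mono2) (auto simp: less_imp_le phi_pos)
qed

lemma pigeon:
  fixes D :: "nat \<Rightarrow> real"
  assumes fin: "finite U" and m2: "card U \<ge> 2" and bd: "\<forall>x\<in>U. 0 \<le> D x \<and> D x \<le> M"
  shows "\<exists>a\<in>U. \<exists>b\<in>U. a \<noteq> b \<and> \<bar>D a - D b\<bar> \<le> 2 * M / (real (card U) - 1)"
proof -
  define m where "m = card U"
  have Une: "U \<noteq> {}" using m2 by auto
  then obtain x0 where "x0 \<in> U" by auto
  hence M0: "M \<ge> 0" using bd by force
  define t where "t x = D x * (real m - 1) / (2 * M)" for x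
  define box where "box x = nat \<lfloor>t x\<rfloor>" for x
  have tb: "0 \<le> t x \<and> t x < real m - 1" if "x \<in> U" for x
  proof (cases "M = 0")
    case True thus ?thesis using m2 by (simp add: t_def m_def)
  next
    case False
    hence Mp: "M > 0" using M0 by simp
    have "t x \<le> M * (real m - 1) / (2 * M)" unfolding t_def using bd that m2 Mp
      by (intro divide_right_mono mult_right_mono) (auto simp: m_def)
    also have "\<dots> = (real m - 1) / 2" using Mp by simp
    also have "\<dots> < real m - 1" using m2 by (simp add: m_def)
    finally show ?thesis using bd that m2 Mp unfolding t_def by (auto simp: m_def)
  qed
  have "box ` U \<subseteq> {0..<m - 1}"
  proof
    fix y assume "y \<in> box ` U"
    then obtain x where x: "x \<in> U" "y = box x" by auto
    have "\<lfloor>t x\<rfloor> < int (m - 1)" using tb[OF x(1)] m2 unfolding m_def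
      by (simp add: floor_less_iff of_nat_diff)
    thus "y \<in> {0..<m - 1}" using x tb[OF x(1)] by (auto simp: box_def)
  qed
  hence "card (box ` U) \<le> m - 1" by (metis card_atLeastLessThan card_mono finite_atLeastLessThan diff_zero)
  hence "card (box ` U) < card U" using m2 m_def by linarith
  hence "\<not> inj_on box U" using card_image by fastforce
  then obtain a b where ab: "a \<in> U" "b \<in> U" "a \<noteq> b" "box a = box b" unfolding inj_on_def by blast
  have f0: "\<lfloor>t a\<rfloor> \<ge> 0" "\<lfloor>t b\<rfloor> \<ge> 0" using tb[OF ab(1)] tb[OF ab(2)] by auto
  have fl: "\<lfloor>t a\<rfloor> = \<lfloor>t b\<rfloor>" using ab(4) f0 unfolding box_def by (metis nat_0_le)
  have "\<bar>t a - t b\<bar> < 1"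
  proof -
    have "of_int \<lfloor>t a\<rfloor> \<le> t a" "t a < of_int \<lfloor>t a\<rfloor> + 1"
         "of_int \<lfloor>t b\<rfloor> \<le> t b" "t b < of_int \<lfloor>t b\<rfloor> + 1"
      by (simp_all add: of_int_floor_le)
    thus ?thesis unfolding abs_less_iff fl by linarith
  qed
  show ?thesis
  proof (cases "M = 0")
    case True
    hence "D a = 0" "D b = 0" using bd ab by force+
    thus ?thesis using ab True by (intro bexI[of _ a] bexI[of _ b]) auto
  next
    case False
    hence Mp: "M > 0" using M0 by simp
    have mp: "real m - 1 > 0" using m2 by (simp add: m_def)
    have "t a - t b = (D a - D b) * (real m - 1) / (2 * M)" unfolding t_def using Mp by (simp add: field_simps)
    hence "\<bar>D a - D b\<bar> * (real m - 1) / (2 * M) < 1" using \<open>\<bar>t a - t b\<bar> < 1\<close> mp Mp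
      by (simp add: abs_mult abs_divide)
    hence "\<bar>D a - D b\<bar> < 2 * M / (real m - 1)" using mp Mp by (simp add: field_simps)
    thus ?thesis using ab unfolding m_def by (intro bexI[of _ a] bexI[of _ b]) auto
  qed
qed

lemma main:
  fixes K :: real and F :: "nat set set"
  assumes finX: "finite X" and FX: "\<forall>f\<in>F. f \<subseteq> X"
    and H: "\<And>U C f. U \<subseteq> X \<Longrightarrow> card U \<le> 1 \<Longrightarrow> f \<in> F \<Longrightarrow> phi U C f \<le> K
              \<Longrightarrow> real (card f) / 100 \<le> real (card (C \<inter> f))"
  shows "U \<subseteq> X \<Longrightarrow> C \<inter> U = {} \<Longrightarrow> Phi F U C * (real (card U) + 1) \<le> K
         \<Longrightarrow> waiter_wins (\<lambda>C. \<forall>f\<in>F. real (card (C \<inter> f)) \<ge> real (card f) / 100) U C"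
proof (induction "card U" arbitrary: U C rule: less_induct)
  case less
  have finF: "finite F" using FX finX by (metis PowI finite_Pow_iff finite_subset subsetI)
  have finf: "\<forall>f\<in>F. finite f" using FX finX finite_subset by blast
  have finU: "finite U" using less.prems(1) finX finite_subset by blast
  have Phi0: "Phi F U C \<ge> 0" unfolding Phi_def by (intro sum_nonneg) (simp add: less_imp_le phi_pos)
  show ?case
  proof (cases "card U \<le> 1")
    case True
    show ?thesis
    proof (rule game_end[OF finU True], intro ballI)
      fix f assume f: "f \<in> F"
      have "phi U C f \<le> Phi F U C" unfolding Phi_def using finF f
        by (intro member_le_sum) (auto simp: less_imp_le phi_pos)
      also have "\<dots> \<le> Phi F U C * (real (card U) + 1)" using Phi0 by (simp add: mult_le_cancel_left1)
      also have "\<dots> \<le> K" by (rule less.prems(3))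
      finally show "real (card f) / 100 \<le> real (card (C \<inter> f))"
        using H[OF less.prems(1) True f] by blast
    qed
  next
    case False
    define m where "m = card U"
    have m2: "card U \<ge> 2" using False by simp
    obtain a b where ab: "a \<in> U" "b \<in> U" "a \<noteq> b"
      and dab: "\<bar>Dv F U C a - Dv F U C b\<bar> \<le> 2 * Phi F U C / (real (card U) - 1)"
      using pigeon[OF finU m2, of "Dv F U C" "Phi F U C"] Dv_bounds[OF finF] by blast
    have mp: "real m - 1 > 0" using m2 by (simp add: m_def)
    have cardU': "card (U - {a, b}) = m - 2" using ab finU by (simp add: m_def card_Diff_subset)
    have rc: "real (card (U - {a, b})) + 1 = real m - 1" using cardU' m2 unfolding m_def
      by (simp add: of_nat_diff)
    have key: "Phi F (U - {a, b}) (insert x C) * (real (card (U - {a, b})) + 1) \<le> K"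
      if "Phi F (U - {a, b}) (insert x C) \<le> Phi F U C + Phi F U C / (real m - 1)" for x
    proof -
      have "Phi F (U - {a, b}) (insert x C) * (real (card (U - {a, b})) + 1)
            \<le> (Phi F U C + Phi F U C / (real m - 1)) * (real m - 1)"
        unfolding rc using that mp by (intro mult_right_mono) auto
      also have "\<dots> = Phi F U C * real m" using mp by (simp add: field_simps)
      also have "\<dots> \<le> Phi F U C * (real m + 1)" using Phi0 by (intro mult_left_mono) auto
      also have "\<dots> \<le> K" using less.prems(3) by (simp add: m_def)
      finally show ?thesis .
    qed
    have sA: "Phi F (U - {a, b}) (insert a C) \<le> Phi F U C + Phi F U C / (real m - 1)"
    proof -
      have "Phi F (U - {a, b}) (insert a C) \<le> Phi F U C - Dv F U C a / 2 + Dv F U C b / 2"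
        using Phi_step[OF ab less.prems(2) finF finf] .
      also have "\<dots> \<le> Phi F U C + Phi F U C / (real m - 1)" using dab unfolding m_def by (simp add: abs_le_iff)
      finally show ?thesis .
    qed
    have sB: "Phi F (U - {a, b}) (insert b C) \<le> Phi F U C + Phi F U C / (real m - 1)"
    proof -
      have e: "U - {a, b} = U - {b, a}" by auto
      have "Phi F (U - {a, b}) (insert b C) \<le> Phi F U C - Dv F U C b / 2 + Dv F U C a / 2"
        unfolding e using Phi_step[OF ab(2,1) _ less.prems(2) finF finf] ab(3) by auto
      also have "\<dots> \<le> Phi F U C + Phi F U C / (real m - 1)" using dab unfolding m_def by (simp add: abs_le_iff)
      finally show ?thesis .
    qed
    have lt: "card (U - {a, b}) < card U" using cardU' m2 by (simp add: m_def)
    have sub: "U - {a, b} \<subseteq> X" using less.prems(1) by auto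
    have dA: "insert a C \<inter> (U - {a, b}) = {}" using less.prems(2) by auto
    have dB: "insert b C \<inter> (U - {a, b}) = {}" using less.prems(2) by auto
    show ?thesis
      by (rule offer[OF ab less.hyps[OF lt sub dA key[OF sA]] less.hyps[OF lt sub dB key[OF sB]]])
  qed
qed

lemma lin_aux:
  fixes w c k L Q R :: real
  assumes "c < k / 100" "w + 1 + c \<ge> k" "L \<ge> 8" "R \<ge> 8 * Q" "Q \<ge> 8 * L" "k \<ge> R"
  shows "w / 4 - c > Q + L + 1"
  using assms by linarith

lemma numeric:
  fixes n k c w :: nat and cF :: real
  assumes n0: "n \<ge> 6561" and kL: "real k \<ge> ln (real n) ^ 3" and ck: "real c < real k / 100"
    and wk: "real w + 1 + real c \<ge> real k" and cF1: "1 \<le> cF" and cFn: "cF \<le> real n powr ln (real n)"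
  shows "cF * (real n + 1) < (3/2) ^ w * (1/2) ^ c"
proof -
  define L where "L = ln (real n)"
  have "(1::real) = ln (exp 1)" by simp
  also have "\<dots> \<le> ln 3" using exp_le by (intro ln_mono) auto
  finally have l3: "ln 3 \<ge> (1::real)" .
  have p8: "(3::real) ^ 8 = 6561" by simp
  have "ln ((3::real) ^ 8) = real 8 * ln 3" by (rule ln_realpow) 
  hence "ln (6561::real) = 8 * ln 3" unfolding p8 by simp
  hence l6: "ln (6561::real) \<ge> 8" using l3 by linarith
  have n6: "(6561::real) \<le> real n" using n0 by simp
  have "ln (6561::real) \<le> L" unfolding L_def by (rule ln_mono) (use n6 in auto)
  hence L8: "L \<ge> 8" using l6 by linarith
  have npos: "real n > 0" using n0 by simp
  have l15: "ln (3/2::real) \<ge> 1/4"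
  proof -
    have "(1/2::real) - (1/2)\<^sup>2 \<le> ln (1 + 1/2)" by (rule ln_one_plus_pos_lower_bound) auto
    moreover have "(1/2::real) - (1/2)\<^sup>2 = 1/4" by (simp add: power2_eq_square)
    moreover have "(1 + 1/2::real) = 3/2" by simp
    ultimately show ?thesis by simp
  qed
  have l2: "ln (2::real) \<le> 1" using ln_2_less_1 by simp
  have cFp: "cF > 0" using cF1 by simp
  have e1: "ln (cF * (real n + 1)) = ln cF + ln (real n + 1)" using cFp npos by (intro ln_mult_pos) auto
  have lcF: "ln cF \<le> L * L"
  proof -
    have "ln cF \<le> ln (real n powr ln (real n))" using cFn cFp by (intro ln_mono) auto
    also have "\<dots> = L * L" unfolding L_def by (rule ln_powr)
    finally show ?thesis .
  qed
  have "ln (real n + 1) \<le> ln (2 * real n)" using npos n6 by (intro ln_mono) auto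
  also have "\<dots> = ln 2 + L" unfolding L_def using npos by (intro ln_mult_pos) auto
  finally have ln1: "ln (real n + 1) \<le> ln 2 + L" .
  have lhs: "ln (cF * (real n + 1)) \<le> L * L + L + 1" using e1 lcF ln1 l2 by linarith
  have r1: "ln ((3/2::real) ^ w * (1/2) ^ c) = ln ((3/2::real) ^ w) + ln ((1/2::real) ^ c)"
    by (intro ln_mult_pos) auto
  have r2: "ln ((3/2::real) ^ w) = real w * ln (3/2)" by (rule ln_realpow)
  have r3: "ln ((1/2::real) ^ c) = real c * ln (1/2)" by (rule ln_realpow)
  have r4: "ln (1/2::real) = - ln 2" by (simp add: ln_div)
  have m1: "real w * (1/4) \<le> real w * ln (3/2)" using l15 by (intro mult_left_mono) auto
  have m2: "real c * ln 2 \<le> real c * 1" using l2 by (intro mult_left_mono) auto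
  have rhs: "ln ((3/2::real) ^ w * (1/2) ^ c) \<ge> real w / 4 - real c"
    using r1 r2 r3 r4 m1 m2 by simp
  have "(L * L) * 8 \<le> (L * L) * L" using L8 by (intro mult_left_mono) auto
  hence a1: "L * L * L \<ge> 8 * (L * L)" by (simp add: mult.commute)
  have a2: "L * L \<ge> 8 * L" using L8 by (intro mult_right_mono) auto
  have a3: "real k \<ge> L * L * L" using kL unfolding L_def by (simp add: power3_eq_cube)
  have "real w / 4 - real c > L * L + L + 1"
    by (rule lin_aux[OF ck wk L8 a1 a2 a3])
  hence lt: "ln (cF * (real n + 1)) < ln ((3/2::real) ^ w * (1/2) ^ c)" using lhs rhs by linarith
  have pa: "cF * (real n + 1) > 0" using cFp npos by simp
  have pb: "(3/2::real) ^ w * (1/2) ^ c > 0" by simp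
  show ?thesis using lt pa pb by (subst ln_less_cancel_iff[symmetric]) auto
qed

theorem lemma6p1:
  shows "\<exists>n0::nat. \<forall>n\<ge>n0. \<forall>(X::nat set) (F::nat set set).
           finite X \<and> card X = n \<and> (\<forall>f\<in>F. f \<subseteq> X)
           \<and> real (card F) \<le> real n powr ln (real n)
           \<and> (\<forall>f\<in>F. real (card f) \<ge> (ln (real n)) ^ 3)
           \<longrightarrow> waiter_wins (\<lambda>C. \<forall>f\<in>F. real (card (C \<inter> f)) \<ge> real (card f) / 100) X {}"
proof (intro exI[of _ 6561] allI impI)
  fix n :: nat and X :: "nat set" and F :: "nat set set"
  assume n0: "6561 \<le> n"
  assume A: "finite X \<and> card X = n \<and> (\<forall>f\<in>F. f \<subseteq> X)
           \<and> real (card F) \<le> real n powr ln (real n)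
           \<and> (\<forall>f\<in>F. real (card f) \<ge> (ln (real n)) ^ 3)"
  hence finX: "finite X" and cX: "card X = n" and FX: "\<forall>f\<in>F. f \<subseteq> X"
    and cF: "real (card F) \<le> real n powr ln (real n)"
    and big: "\<forall>f\<in>F. real (card f) \<ge> (ln (real n)) ^ 3" by auto
  have finF: "finite F" using FX finX by (metis PowI finite_Pow_iff finite_subset subsetI)
  define K where "K = real (card F) * (real n + 1)"
  have H: "real (card f) / 100 \<le> real (card (C \<inter> f))"
    if U: "U \<subseteq> X" "card U \<le> 1" "f \<in> F" "phi U C f \<le> K" for U C f
  proof (rule ccontr)
    assume "\<not> ?thesis"
    hence ck: "real (card (C \<inter> f)) < real (card f) / 100" by simp
    have finf: "finite f" using FX U(3) finX finite_subset by blast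
    have finU: "finite U" using U(1) finX finite_subset by blast
    have "f \<subseteq> (f - U - C) \<union> U \<union> (C \<inter> f)" by auto
    hence "card f \<le> card ((f - U - C) \<union> U \<union> (C \<inter> f))"
      using finf finU by (intro card_mono) auto
    also have "\<dots> \<le> card (f - U - C) + card U + card (C \<inter> f)"
    proof -
      have "card ((f - U - C) \<union> U \<union> (C \<inter> f)) \<le> card ((f - U - C) \<union> U) + card (C \<inter> f)"
        by (rule card_Un_le)
      moreover have "card ((f - U - C) \<union> U) \<le> card (f - U - C) + card U" by (rule card_Un_le)
      ultimately show ?thesis by linarith
    qed
    finally have "card f \<le> card (f - U - C) + 1 + card (C \<inter> f)" using U(2) by linarith
    hence wk: "real (card (f - U - C)) + 1 + real (card (C \<inter> f)) \<ge> real (card f)" by linarith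
    have "card F > 0" using finF U(3) card_gt_0_iff by blast
    hence cF1: "1 \<le> real (card F)" by simp
    have "K < (3/2) ^ card (f - U - C) * (1/2) ^ card (C \<inter> f)"
      unfolding K_def using numeric[OF n0 _ ck wk cF1 cF] big U(3) by blast
    also have "\<dots> = phi U C f" unfolding phi_def by (simp add: Int_commute)
    finally show False using U(4) by simp
  qed
  have P0: "Phi F X {} = real (card F)" unfolding Phi_def phi_def using FX
    by (simp add: Diff_eq_empty_iff[THEN iffD2])
  show "waiter_wins (\<lambda>C. \<forall>f\<in>F. real (card (C \<inter> f)) \<ge> real (card f) / 100) X {}"
    by (rule main[OF finX FX H]) (auto simp: P0 cX K_def)
qed

end
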